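(* Let $n\ge1$, let $q_1,q_2$ be powers of a prime $p$, $q=q_1\otimes q_2$, and $R=A(n,q_1,q_2)$. Let $J$ be the set of elements of $R$ of the form $\begin{pmatrix} 0 & v\\ 0 & 0\end{pmatrix}$, $v\in M_{n\times1}(\mathbb{F}_q)$ (this is the Jacobson radical of $R$). Then $J\cap Z(R)=\{0\}$, where $Z(R)$ is the center of $R$, and $|\mathscr{S}(R)|=|J|$.
   Context: For powers $q_1=p^{d_1}$, $q_2=p^{d_2}$ of a prime $p$, $q_1\otimes q_2:=p^{\operatorname{lcm}(d_1,d_2)}$; $\mathbb{F}_{q_1},\mathbb{F}_{q_2}$ are regarded as subfields of $\mathbb{F}_q$. $A(n,q_1,q_2)$ is the subring of $M_{n+1}(\mathbb{F}_q)$ of all block matrices $\begin{pmatrix} A & v\\ 0 & b\end{pmatrix}$ with $A\in M_n(\mathbb{F}_{q_1})$, $v\in M_{n\times 1}(\mathbb{F}_q)$, $b\in\mathbb{F}_{q_2}$. $\mathscr{S}(R)$ denotes the set of all semisimple complements to $J$ in $R$, i.e. $\mathbb{F}_p$-subalgebras $T$ of $R$ with $R=T\oplus J$ (and $T\cong R/J$). *)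

theory Defs
  imports "Jordan_Normal_Form.Matrix" "HOL-Computational_Algebra.Primes"
begin

text \<open>The ambient finite field F_q is a finite field type 'a. For a prime power Q dividing
  appropriately, the subfield F_Q of F_q is the set of roots of X^Q - X.\<close>

definition subfield_of_order :: "nat \<Rightarrow> 'a::{field,finite} set" where
  "subfield_of_order Q = {x. x ^ Q = x}"

text \<open>A(n,q1,q2): block matrices (A v; 0 b) of size (n+1) x (n+1) over 'a, with
  A in M_n(F_q1), v in F_q^n, b in F_q2. Index n is the last row/column.\<close>

definition A_ring :: "nat \<Rightarrow> nat \<Rightarrow> nat \<Rightarrow> 'a::{field,finite} mat set" where
  "A_ring n q1 q2 = {M \<in> carrier_mat (n+1) (n+1).
      (\<forall>i<n. \<forall>j<n. M $$ (i,j) \<in> subfield_of_order q1) \<and>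
      (\<forall>j<n. M $$ (n,j) = 0) \<and>
      M $$ (n,n) \<in> subfield_of_order q2}"

text \<open>The set J of matrices (0 v; 0 0).\<close>

definition J_ideal :: "nat \<Rightarrow> 'a::{field,finite} mat set" where
  "J_ideal n = {M \<in> carrier_mat (n+1) (n+1).
      \<forall>i<n+1. \<forall>j<n+1. (j \<noteq> n \<or> i = n) \<longrightarrow> M $$ (i,j) = 0}"

definition ring_center :: "nat \<Rightarrow> 'a::ring mat set \<Rightarrow> 'a mat set" where
  "ring_center n R = {z \<in> R. \<forall>x\<in>R. z * x = x * z}"

text \<open>(Unital) F_p-subalgebra of R (a subring of R containing the identity; in
  characteristic p, closure under F_p-scalars is closure under addition).\<close>

definition is_subalgebra :: "nat \<Rightarrow> 'a::{field,finite} mat set \<Rightarrow> 'a mat set \<Rightarrow> bool" where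
  "is_subalgebra n R T \<longleftrightarrow> T \<subseteq> R \<and> 1\<^sub>m (n+1) \<in> T \<and> 0\<^sub>m (n+1) (n+1) \<in> T \<and>
     (\<forall>x\<in>T. \<forall>y\<in>T. x + y \<in> T \<and> x * y \<in> T \<and> - x \<in> T)"

definition semisimple_complements ::
    "nat \<Rightarrow> 'a::{field,finite} mat set \<Rightarrow> 'a mat set \<Rightarrow> 'a mat set set" where
  "semisimple_complements n R J = {T. is_subalgebra n R T \<and>
     (\<forall>r\<in>R. \<exists>!(t,j). t \<in> T \<and> j \<in> J \<and> r = t + j)}"

end

theory Submission
  imports Defs "HOL-Number_Theory.Residues"
begin

definition closedS :: "'a::field set \<Rightarrow> bool" where
  "closedS S \<longleftrightarrow> 0 \<in> S \<and> 1 \<in> S \<and> (\<forall>x\<in>S. \<forall>y\<in>S. x + y \<in> S \<and> x * y \<in> S \<and> - x \<in> S)"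

lemma char_eq:
  assumes "prime p" "card (UNIV::'a::{field,finite} set) = p ^ k"
  shows "CHAR('a) = p"
proof -
  have pos: "CHAR('a) > 0" by (rule finite_imp_CHAR_pos) simp
  have pr: "prime CHAR('a)" using prime_CHAR_semidom[OF pos] .
  have "CHAR('a) dvd p ^ k" using CHAR_dvd_CARD[where 'a='a] assms(2) by simp
  then have "CHAR('a) dvd p" using prime_dvd_power[OF pr] by blast
  then show ?thesis using pr assms(1) by (simp add: primes_dvd_imp_eq)
qed

lemma sub_closed:
  assumes "prime p" "card (UNIV::'a::{field,finite} set) = p ^ k"
  shows "closedS (subfield_of_order (p ^ d) :: 'a set)"
proof -
  have c: "CHAR('a) = p" using char_eq[OF assms] .
  have pr: "prime CHAR('a)" using c assms(1) by simp
  have add: "(x + y :: 'a) ^ (p^d) = x ^ (p^d) + y ^ (p^d)" for x y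
  proof -
    have "(x+y)^(CHAR('a)^d) = x^(CHAR('a)^d) + y^(CHAR('a)^d)" by (rule freshmans_dream'[OF pr refl])
    then show ?thesis using c by simp
  qed
  have pos: "p ^ d > 0" using prime_gt_0_nat[OF assms(1)] by simp
  have z: "(0::'a) ^ p ^ d = 0" using pos by simp
  have "(-x) ^ p ^ d = - x" if x: "x ^ p ^ d = x" for x :: 'a
  proof -
    have "(-x) ^ p ^ d + x ^ p ^ d = 0" using add[of "-x" x] z by simp
    then show "(- x) ^ p ^ d = - x" using x by (simp add: add_eq_0_iff2)
  qed
  then show ?thesis unfolding closedS_def subfield_of_order_def
    using z add by (simp add: power_mult_distrib)
qed


definition Aset :: "nat \<Rightarrow> 'a::field set \<Rightarrow> 'a set \<Rightarrow> 'a mat set" where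
  "Aset n S1 S2 = {M \<in> carrier_mat (n+1) (n+1).
      (\<forall>i<n. \<forall>j<n. M $$ (i,j) \<in> S1) \<and> (\<forall>j<n. M $$ (n,j) = 0) \<and> M $$ (n,n) \<in> S2}"

lemma A_ring_Aset: "A_ring n q1 q2 = Aset n (subfield_of_order q1) (subfield_of_order q2)"
  unfolding A_ring_def Aset_def by simp

lemma mult_entry:
  assumes "x \<in> carrier_mat (n+1) (n+1)" "y \<in> carrier_mat (n+1) (n+1)" "i < n+1" "j < n+1"
  shows "(x * y) $$ (i,j) = (\<Sum>k<n. x $$ (i,k) * y $$ (k,j)) + x $$ (i,n) * y $$ (n,j)"
  using assms by (simp add: scalar_prod_def lessThan_atLeast0 row_def col_def)

lemma sum_closed:
  fixes m :: nat
  assumes "closedS S" "\<forall>k<m. f k \<in> S"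
  shows "(\<Sum>k<m. f k) \<in> S"
  using assms(2)
proof (induction m)
  case 0 then show ?case using assms(1) by (simp add: closedS_def)
next
  case (Suc m) then show ?case using assms(1) by (simp add: closedS_def)
qed

lemma Aset_closed:
  assumes c1: "closedS S1" and c2: "closedS S2"
  shows "1\<^sub>m (n+1) \<in> Aset n S1 S2" "0\<^sub>m (n+1) (n+1) \<in> Aset n S1 S2"
    "x \<in> Aset n S1 S2 \<Longrightarrow> y \<in> Aset n S1 S2 \<Longrightarrow> x + y \<in> Aset n S1 S2"
    "x \<in> Aset n S1 S2 \<Longrightarrow> - x \<in> Aset n S1 S2"
    "x \<in> Aset n S1 S2 \<Longrightarrow> y \<in> Aset n S1 S2 \<Longrightarrow> x * y \<in> Aset n S1 S2"
proof -
  show "1\<^sub>m (n+1) \<in> Aset n S1 S2" using c1 c2 unfolding Aset_def closedS_def by auto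
  show "0\<^sub>m (n+1) (n+1) \<in> Aset n S1 S2" using c1 c2 unfolding Aset_def closedS_def by auto
  show "x \<in> Aset n S1 S2 \<Longrightarrow> y \<in> Aset n S1 S2 \<Longrightarrow> x + y \<in> Aset n S1 S2"
    using c1 c2 unfolding Aset_def closedS_def by auto
  show "x \<in> Aset n S1 S2 \<Longrightarrow> - x \<in> Aset n S1 S2"
    using c1 c2 unfolding Aset_def closedS_def by auto
  assume x: "x \<in> Aset n S1 S2" and y: "y \<in> Aset n S1 S2"
  have cx: "x \<in> carrier_mat (n+1) (n+1)" and cy: "y \<in> carrier_mat (n+1) (n+1)"
    using x y unfolding Aset_def by auto
  have e1: "(x*y) $$ (i,j) \<in> S1" if "i<n" "j<n" for i j
  proof -
    have "(x*y) $$ (i,j) = (\<Sum>k<n. x $$ (i,k) * y $$ (k,j))"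
      using mult_entry[OF cx cy, of i j] that y unfolding Aset_def by simp
    also have "\<dots> \<in> S1"
      using x y that c1 by (intro sum_closed) (auto simp: Aset_def closedS_def)
    finally show ?thesis .
  qed
  have e2: "(x*y) $$ (n,j) = 0" if "j<n" for j
    using mult_entry[OF cx cy, of n j] that x y unfolding Aset_def by simp
  have e3: "(x*y) $$ (n,n) \<in> S2"
    using mult_entry[OF cx cy, of n n] x y c2 unfolding Aset_def closedS_def by simp
  show "x * y \<in> Aset n S1 S2" using e1 e2 e3 cx cy unfolding Aset_def by auto
qed


definition Tw :: "nat \<Rightarrow> 'a::field set \<Rightarrow> 'a set \<Rightarrow> (nat \<Rightarrow> 'a) \<Rightarrow> 'a mat set" where
  "Tw n S1 S2 w = {M \<in> Aset n S1 S2.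
     \<forall>i<n. M $$ (i,n) = w i * M $$ (n,n) - (\<Sum>k<n. M $$ (i,k) * w k)}"

definition offJ :: "nat \<Rightarrow> 'a::field mat \<Rightarrow> 'a mat \<Rightarrow> bool" where
  "offJ n x y \<longleftrightarrow> (\<forall>i<n+1. \<forall>j<n+1. (j \<noteq> n \<or> i = n) \<longrightarrow> x $$ (i,j) = y $$ (i,j))"

lemma Tw_unique:
  assumes "x \<in> Tw n S1 S2 w" "y \<in> Tw n S1 S2 w" "offJ n x y"
  shows "x = y"
proof -
  have cx: "x \<in> carrier_mat (n+1) (n+1)" and cy: "y \<in> carrier_mat (n+1) (n+1)"
    using assms unfolding Tw_def Aset_def by auto
  show ?thesis
  proof (rule eq_matI)
    fix i j assume i: "i < dim_row y" and j: "j < dim_col y"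
    show "x $$ (i,j) = y $$ (i,j)"
    proof (cases "j \<noteq> n \<or> i = n")
      case True then show ?thesis using assms(3) i j cy unfolding offJ_def by auto
    next
      case False
      then have ji: "j = n" "i < n" using i cy by auto
      have s: "(\<Sum>k<n. x $$ (i,k) * w k) = (\<Sum>k<n. y $$ (i,k) * w k)"
        using assms(3) ji unfolding offJ_def by (intro sum.cong) auto
      have "x $$ (n,n) = y $$ (n,n)" using assms(3) unfolding offJ_def by auto
      then show ?thesis using assms(1,2) ji s unfolding Tw_def by auto
    qed
  qed (use cx cy in auto)
qed

lemma J_offJ: "j \<in> J_ideal n \<Longrightarrow> x \<in> carrier_mat (n+1) (n+1) \<Longrightarrow> offJ n (x + j) x"
  unfolding J_ideal_def offJ_def by auto

lemma J_diff: "x \<in> carrier_mat (n+1) (n+1) \<Longrightarrow> y \<in> carrier_mat (n+1) (n+1) \<Longrightarrow> offJ n x y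
   \<Longrightarrow> x - y \<in> J_ideal n"
  unfolding J_ideal_def offJ_def by auto

lemma zero_J: "0\<^sub>m (n+1) (n+1) \<in> J_ideal n"
  unfolding J_ideal_def by auto

lemma Tw_complement:
  assumes c1: "closedS S1" and c2: "closedS S2"
  shows "Tw n S1 S2 w \<in> semisimple_complements n (Aset n S1 S2) (J_ideal n)"
proof -
  let ?R = "Aset n S1 S2" and ?T = "Tw n S1 S2 w"
  have car: "x \<in> ?R \<Longrightarrow> x \<in> carrier_mat (n+1) (n+1)" for x unfolding Aset_def by auto
  have one: "1\<^sub>m (n+1) \<in> ?T"
  proof -
    have "(\<Sum>k<n. 1\<^sub>m (n+1) $$ (i,k) * w k) = w i" if "i<n" for i
    proof -
      have "(\<Sum>k<n. 1\<^sub>m (n+1) $$ (i,k) * w k) = (\<Sum>k<n. if k = i then w k else 0)"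
        using that by (intro sum.cong) auto
      also have "\<dots> = w i" using that by (simp add: sum.delta)
      finally show ?thesis .
    qed
    then show ?thesis using Aset_closed(1)[OF c1 c2] unfolding Tw_def by auto
  qed
  have zero: "0\<^sub>m (n+1) (n+1) \<in> ?T"
    using Aset_closed(2)[OF c1 c2] unfolding Tw_def by auto
  have add: "x + y \<in> ?T" if x: "x \<in> ?T" and y: "y \<in> ?T" for x y
  proof -
    have xr: "x \<in> ?R" and yr: "y \<in> ?R" using x y unfolding Tw_def by auto
    have "(x+y) $$ (i,n) = w i * (x+y) $$ (n,n) - (\<Sum>k<n. (x+y) $$ (i,k) * w k)" if i: "i<n" for i
    proof -
      have "(\<Sum>k<n. (x+y) $$ (i,k) * w k) = (\<Sum>k<n. x $$ (i,k) * w k) + (\<Sum>k<n. y $$ (i,k) * w k)"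
        using car[OF xr] car[OF yr] i by (simp add: sum.distrib ring_distribs)
      then show ?thesis using x y i car[OF xr] car[OF yr] unfolding Tw_def by (simp add: ring_distribs)
    qed
    then show ?thesis using Aset_closed(3)[OF c1 c2 xr yr] unfolding Tw_def by auto
  qed
  have neg: "- x \<in> ?T" if x: "x \<in> ?T" for x
  proof -
    have xr: "x \<in> ?R" using x unfolding Tw_def by auto
    have "(-x) $$ (i,n) = w i * (-x) $$ (n,n) - (\<Sum>k<n. (-x) $$ (i,k) * w k)" if i: "i<n" for i
    proof -
      have "(\<Sum>k<n. (-x) $$ (i,k) * w k) = - (\<Sum>k<n. x $$ (i,k) * w k)"
        using car[OF xr] i by (simp add: sum_negf)
      then show ?thesis using x i car[OF xr] unfolding Tw_def by (simp add: ring_distribs)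
    qed
    then show ?thesis using Aset_closed(4)[OF c1 c2 xr] unfolding Tw_def by auto
  qed
  have mul: "x * y \<in> ?T" if x: "x \<in> ?T" and y: "y \<in> ?T" for x y
  proof -
    have xr: "x \<in> ?R" and yr: "y \<in> ?R" using x y unfolding Tw_def by auto
    note cx = car[OF xr] and cy = car[OF yr]
    have xn: "x $$ (n,k) = 0" if "k<n" for k using xr that unfolding Aset_def by auto
    have yn: "y $$ (n,k) = 0" if "k<n" for k using yr that unfolding Aset_def by auto
    have "(x*y) $$ (i,n) = w i * (x*y) $$ (n,n) - (\<Sum>l<n. (x*y) $$ (i,l) * w l)" if i: "i<n" for i
    proof -
      have ynn: "(x*y) $$ (n,n) = x $$ (n,n) * y $$ (n,n)"
        using mult_entry[OF cx cy, of n n] xn by simp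
      have yil: "(x*y) $$ (i,l) = (\<Sum>k<n. x $$ (i,k) * y $$ (k,l))" if "l<n" for l
        using mult_entry[OF cx cy, of i l] i that yn by simp
      have ykn: "y $$ (k,n) = w k * y $$ (n,n) - (\<Sum>l<n. y $$ (k,l) * w l)" if "k<n" for k
        using y that unfolding Tw_def by auto
      have xin: "x $$ (i,n) = w i * x $$ (n,n) - (\<Sum>k<n. x $$ (i,k) * w k)"
        using x i unfolding Tw_def by auto
      have S: "(\<Sum>l<n. (x*y) $$ (i,l) * w l) = (\<Sum>k<n. \<Sum>l<n. x $$ (i,k) * y $$ (k,l) * w l)"
      proof -
        have "(\<Sum>l<n. (x*y) $$ (i,l) * w l) = (\<Sum>l<n. \<Sum>k<n. x $$ (i,k) * y $$ (k,l) * w l)"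
          using yil by (simp add: sum_distrib_right)
        also have "\<dots> = (\<Sum>k<n. \<Sum>l<n. x $$ (i,k) * y $$ (k,l) * w l)" by (rule sum.swap)
        finally show ?thesis .
      qed
      have "(x*y) $$ (i,n) = (\<Sum>k<n. x $$ (i,k) * y $$ (k,n)) + x $$ (i,n) * y $$ (n,n)"
        using mult_entry[OF cx cy, of i n] i by simp
      also have "(\<Sum>k<n. x $$ (i,k) * y $$ (k,n))
          = (\<Sum>k<n. x $$ (i,k) * w k * y $$ (n,n)) - (\<Sum>k<n. \<Sum>l<n. x $$ (i,k) * y $$ (k,l) * w l)"
      proof -
        have "(\<Sum>k<n. x $$ (i,k) * y $$ (k,n))
          = (\<Sum>k<n. x $$ (i,k) * w k * y $$ (n,n) - (\<Sum>l<n. x $$ (i,k) * y $$ (k,l) * w l))"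
          using ykn by (intro sum.cong) (auto simp: ring_distribs sum_distrib_left mult.assoc)
        then show ?thesis by (simp add: sum_subtractf)
      qed
      also have "x $$ (i,n) * y $$ (n,n) = w i * (x $$ (n,n) * y $$ (n,n)) - (\<Sum>k<n. x $$ (i,k) * w k * y $$ (n,n))"
        using xin by (simp add: ring_distribs sum_distrib_right mult.assoc)
      finally show ?thesis using ynn S by simp
    qed
    then show ?thesis using Aset_closed(5)[OF c1 c2 xr yr] unfolding Tw_def by auto
  qed
  have sub: "is_subalgebra n ?R ?T"
    unfolding is_subalgebra_def using one zero add mul neg by (auto simp: Tw_def)
  have dec: "\<exists>!(t,j). t \<in> ?T \<and> j \<in> J_ideal n \<and> r = t + j" if r: "r \<in> ?R" for r
  proof -
    note cr = car[OF r]
    define t where "t = mat (n+1) (n+1) (\<lambda>(i,j). if j = n \<and> i < n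
        then w i * r $$ (n,n) - (\<Sum>k<n. r $$ (i,k) * w k) else r $$ (i,j))"
    have ct: "t \<in> carrier_mat (n+1) (n+1)" unfolding t_def by auto
    have off: "offJ n t r" unfolding offJ_def t_def by auto
    have tT: "t \<in> ?T"
    proof -
      have "t \<in> ?R" using r unfolding Aset_def t_def by auto
      moreover have "\<forall>i<n. t $$ (i,n) = w i * t $$ (n,n) - (\<Sum>k<n. t $$ (i,k) * w k)"
      proof (intro allI impI)
        fix i assume i: "i < n"
        have "(\<Sum>k<n. t $$ (i,k) * w k) = (\<Sum>k<n. r $$ (i,k) * w k)"
          using i unfolding t_def by (intro sum.cong) auto
        then show "t $$ (i,n) = w i * t $$ (n,n) - (\<Sum>k<n. t $$ (i,k) * w k)"
          using i unfolding t_def by simp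
      qed
      ultimately show ?thesis unfolding Tw_def by auto
    qed
    have jJ: "r - t \<in> J_ideal n" using J_diff[OF cr ct] off unfolding offJ_def by auto
    have eq: "r = t + (r - t)" using cr ct by (intro eq_matI) auto
    show ?thesis
    proof (rule ex1I[of _ "(t, r - t)"])
      show "case (t, r - t) of (t', j) \<Rightarrow> t' \<in> ?T \<and> j \<in> J_ideal n \<and> r = t' + j"
        using tT jJ eq by simp
    next
      fix pr assume "case pr of (t', j) \<Rightarrow> t' \<in> ?T \<and> j \<in> J_ideal n \<and> r = t' + j"
      then obtain a b where pr: "pr = (a,b)" and a: "a \<in> ?T" and b: "b \<in> J_ideal n" and rab: "r = a + b"
        by auto
      have ca: "a \<in> carrier_mat (n+1) (n+1)" using a car unfolding Tw_def by auto
      have "offJ n r a" using J_offJ[OF b ca] rab by simp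
      then have "offJ n t a" using off unfolding offJ_def by auto
      then have ta: "t = a" using Tw_unique[OF tT a] by simp
      have cb: "b \<in> carrier_mat (n+1) (n+1)" using b unfolding J_ideal_def by auto
      have "b = r - t" using rab ta ca cb by (intro eq_matI) auto
      then show "pr = (t, r - t)" using pr ta by simp
    qed
  qed
  show ?thesis unfolding semisimple_complements_def using sub dec by auto
qed




definition Emat :: "nat \<Rightarrow> 'a::field mat" where
  "Emat n = mat (n+1) (n+1) (\<lambda>(i,j). if i = n \<and> j = n then 1 else 0)"

lemma Emat_in: "closedS S1 \<Longrightarrow> closedS S2 \<Longrightarrow> Emat n \<in> Aset n S1 S2"
  unfolding Aset_def Emat_def closedS_def by auto

lemma compl_offJ_eq:
  assumes "T \<in> semisimple_complements n R (J_ideal n)" "x \<in> T" "y \<in> T"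
    "x \<in> carrier_mat (n+1) (n+1)" "y \<in> carrier_mat (n+1) (n+1)" "offJ n x y"
  shows "x = y"
proof -
  have TR: "T \<subseteq> R" and U: "\<forall>r\<in>R. \<exists>!(t,j). t \<in> T \<and> j \<in> J_ideal n \<and> r = t + j"
    using assms(1) unfolding semisimple_complements_def is_subalgebra_def by auto
  have xR: "x \<in> R" using TR assms(2) by auto
  have e1: "x = x + 0\<^sub>m (n+1) (n+1)" using assms(4) by simp
  have e2: "x = y + (x - y)" using assms(4,5) by (intro eq_matI) auto
  have u: "\<exists>!pr. (case pr of (t,j) \<Rightarrow> t \<in> T \<and> j \<in> J_ideal n \<and> x = t + j)"
    using U xR by blast
  have p1: "case (x, 0\<^sub>m (n+1) (n+1)) of (t,j) \<Rightarrow> t \<in> T \<and> j \<in> J_ideal n \<and> x = t + j"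
    using assms(2) zero_J[of n] e1 by simp
  have p2: "case (y, x - y) of (t,j) \<Rightarrow> t \<in> T \<and> j \<in> J_ideal n \<and> x = t + j"
    using assms(3) J_diff[OF assms(4,5,6)] e2 by simp
  have ex1: "\<And>P a b. (\<exists>!z. P z) \<Longrightarrow> P a \<Longrightarrow> P b \<Longrightarrow> a = b" by blast
  have "(x, 0\<^sub>m (n+1) (n+1)) = (y, x - y)"
    by (rule ex1[OF u p1 p2])
  then show ?thesis by simp
qed

lemma compl_dec:
  assumes "T \<in> semisimple_complements n R J" "r \<in> R"
  shows "\<exists>t j. t \<in> T \<and> j \<in> J \<and> r = t + j"
proof -
  have "\<exists>!pr. (case pr of (t,j) \<Rightarrow> t \<in> T \<and> j \<in> J \<and> r = t + j)"
    using assms unfolding semisimple_complements_def by blast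
  then obtain pr where "case pr of (t,j) \<Rightarrow> t \<in> T \<and> j \<in> J \<and> r = t + j"
    by (rule ex1E)
  then show ?thesis by (cases pr) auto
qed

lemma complement_is_Tw:
  assumes c1: "closedS S1" and c2: "closedS S2"
    and T: "T \<in> semisimple_complements n (Aset n S1 S2) (J_ideal n)"
  shows "\<exists>w. T = Tw n S1 S2 w"
proof -
  let ?R = "Aset n S1 S2"
  have car: "x \<in> ?R \<Longrightarrow> x \<in> carrier_mat (n+1) (n+1)" for x unfolding Aset_def by auto
  have TR: "T \<subseteq> ?R" and U: "\<forall>r\<in>?R. \<exists>!(t,j). t \<in> T \<and> j \<in> J_ideal n \<and> r = t + j"
    and Tm: "\<And>x y. x \<in> T \<Longrightarrow> y \<in> T \<Longrightarrow> x * y \<in> T"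
    using T unfolding semisimple_complements_def is_subalgebra_def by auto
  obtain P jE where P: "P \<in> T" and jE: "jE \<in> J_ideal n" and EP: "Emat n = P + jE"
    using compl_dec[OF T Emat_in[OF c1 c2, of n]] by blast
  have cP: "P \<in> carrier_mat (n+1) (n+1)" using P TR car by auto
  have offP: "offJ n (Emat n) P" using J_offJ[OF jE cP] EP by simp
  have P0: "P $$ (k,j) = 0" if "k < n+1" "j < n" for k j
  proof -
    have "Emat n $$ (k,j) = P $$ (k,j)" using offP that unfolding offJ_def by auto
    then show ?thesis using that by (simp add: Emat_def)
  qed
  have P1: "P $$ (n,n) = 1"
  proof -
    have "Emat n $$ (n,n) = P $$ (n,n)" using offP unfolding offJ_def by auto
    then show ?thesis by (simp add: Emat_def)
  qed
  define w where "w i = P $$ (i,n)" for i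
  have sub: "T \<subseteq> Tw n S1 S2 w"
  proof
    fix t assume t: "t \<in> T"
    have tR: "t \<in> ?R" using t TR by auto
    note ct = car[OF tR]
    have tn: "t $$ (n,k) = 0" if "k<n" for k using tR that unfolding Aset_def by auto
    have a: "t * P \<in> T" and b: "P * t \<in> T" using Tm t P by auto
    have ca: "t * P \<in> carrier_mat (n+1) (n+1)" and cb: "P * t \<in> carrier_mat (n+1) (n+1)"
      using ct cP by auto
    have aij: "(t*P) $$ (i,j) = 0" if "i<n+1" "j<n" for i j
      using mult_entry[OF ct cP, of i j] that P0 by simp
    have bij: "(P*t) $$ (i,j) = 0" if "i<n+1" "j<n" for i j
      using mult_entry[OF cP ct, of i j] that P0 tn by simp
    have ann: "(t*P) $$ (n,n) = t $$ (n,n)"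
      using mult_entry[OF ct cP, of n n] P1 tn by simp
    have bnn: "(P*t) $$ (n,n) = t $$ (n,n)"
      using mult_entry[OF cP ct, of n n] P1 P0 by simp
    have off: "offJ n (t*P) (P*t)"
      unfolding offJ_def
    proof (intro allI impI)
      fix i j assume "i < n+1" "j < n+1" "j \<noteq> n \<or> i = n"
      then show "(t*P) $$ (i,j) = (P*t) $$ (i,j)"
        using aij bij ann bnn by (cases "j = n") auto
    qed
    have ab: "t * P = P * t" using compl_offJ_eq[OF T a b ca cb off] .
    have "t $$ (i,n) = w i * t $$ (n,n) - (\<Sum>k<n. t $$ (i,k) * w k)" if i: "i<n" for i
    proof -
      have "(t*P) $$ (i,n) = (\<Sum>k<n. t $$ (i,k) * w k) + t $$ (i,n)"
        using mult_entry[OF ct cP, of i n] i P1 unfolding w_def by simp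
      moreover have "(P*t) $$ (i,n) = w i * t $$ (n,n)"
        using mult_entry[OF cP ct, of i n] i P0 unfolding w_def by simp
      ultimately show ?thesis using ab by (simp add: algebra_simps)
    qed
    then show "t \<in> Tw n S1 S2 w" using tR unfolding Tw_def by auto
  qed
  have "Tw n S1 S2 w \<subseteq> T"
  proof
    fix x assume x: "x \<in> Tw n S1 S2 w"
    then have xR: "x \<in> ?R" unfolding Tw_def by auto
    obtain t j where t: "t \<in> T" and j: "j \<in> J_ideal n" and xtj: "x = t + j"
      using compl_dec[OF T xR] by blast
    have ct: "t \<in> carrier_mat (n+1) (n+1)" using t TR car by auto
    have "offJ n x t" using J_offJ[OF j ct] xtj by simp
    then have "x = t" using Tw_unique[OF x] sub t by auto
    then show "x \<in> T" using t by simp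
  qed
  then show ?thesis using sub by auto
qed

lemma Tw_inj:
  assumes c1: "closedS S1" and c2: "closedS S2" and eq: "Tw n S1 S2 w = Tw n S1 S2 w'" and i: "i < n"
  shows "w i = w' i"
proof -
  define M where "M = mat (n+1) (n+1) (\<lambda>(i,j). if j = n then (if i < n then w i else 1) else 0)"
  have MR: "M \<in> Aset n S1 S2" using c1 c2 unfolding M_def Aset_def closedS_def by auto
  have "M \<in> Tw n S1 S2 w" using MR unfolding Tw_def M_def by auto
  then have "M \<in> Tw n S1 S2 w'" using eq by simp
  then show ?thesis using i unfolding Tw_def M_def by auto
qed

lemma Tw_cong: "(\<And>i. i < n \<Longrightarrow> w i = w' i) \<Longrightarrow> Tw n S1 S2 w = Tw n S1 S2 w'"
  unfolding Tw_def by (intro Collect_cong conj_cong refl all_cong) (auto intro!: sum.cong)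


theorem lemma3p1:
  fixes n p d1 d2 :: nat
  assumes "n \<ge> 1" and "prime p" and "d1 \<ge> 1" and "d2 \<ge> 1"
    and "card (UNIV :: 'a set) = p ^ lcm d1 d2"
  defines "R \<equiv> (A_ring n (p ^ d1) (p ^ d2) :: 'a::{field,finite} mat set)"
    and "J \<equiv> (J_ideal n :: 'a mat set)"
  shows "J \<inter> ring_center n R = {0\<^sub>m (n+1) (n+1)}
     \<and> card (semisimple_complements n R J) = card J"
proof -
  define S1 where "S1 = (subfield_of_order (p ^ d1) :: 'a set)"
  define S2 where "S2 = (subfield_of_order (p ^ d2) :: 'a set)"
  have c1: "closedS S1" unfolding S1_def by (rule sub_closed[OF assms(2) assms(5)])
  have c2: "closedS S2" unfolding S2_def by (rule sub_closed[OF assms(2) assms(5)])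
  have RA: "R = Aset n S1 S2" unfolding R_def S1_def S2_def by (rule A_ring_Aset)
  have car: "x \<in> R \<Longrightarrow> x \<in> carrier_mat (n+1) (n+1)" for x unfolding RA Aset_def by auto
  have part1: "J \<inter> ring_center n R = {0\<^sub>m (n+1) (n+1)}"
  proof
    show "{0\<^sub>m (n+1) (n+1)} \<subseteq> J \<inter> ring_center n R"
    proof -
      have "0\<^sub>m (n+1) (n+1) \<in> R" unfolding RA by (rule Aset_closed(2)[OF c1 c2])
      moreover have "0\<^sub>m (n+1) (n+1) * x = x * 0\<^sub>m (n+1) (n+1)" if "x \<in> R" for x
        using car[OF that] by simp
      ultimately show ?thesis using zero_J[of n] unfolding J_def ring_center_def by auto
    qed
  next
    show "J \<inter> ring_center n R \<subseteq> {0\<^sub>m (n+1) (n+1)}"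
    proof
      fix z assume z: "z \<in> J \<inter> ring_center n R"
      have ER: "Emat n \<in> R" unfolding RA by (rule Emat_in[OF c1 c2])
      have zJ: "z \<in> J_ideal n" using z unfolding J_def by auto
      have cz: "z \<in> carrier_mat (n+1) (n+1)" using zJ unfolding J_ideal_def by auto
      have cE: "Emat n \<in> carrier_mat (n+1) (n+1)" unfolding Emat_def by auto
      have comm: "z * Emat n = Emat n * z" using z ER unfolding ring_center_def by auto
      have z0: "z $$ (i,k) = 0" if "i < n+1" "k < n+1" "k \<noteq> n \<or> i = n" for i k
        using zJ that unfolding J_ideal_def by auto
      have zin: "z $$ (i,n) = 0" if i: "i < n" for i
      proof -
        have "(z * Emat n) $$ (i,n) = z $$ (i,n)"
          using mult_entry[OF cz cE, of i n] i by (simp add: Emat_def)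
        moreover have "(Emat n * z) $$ (i,n) = 0"
          using mult_entry[OF cE cz, of i n] i by (simp add: Emat_def)
        ultimately show ?thesis using comm by simp
      qed
      have "z = 0\<^sub>m (n+1) (n+1)"
      proof (rule eq_matI)
        fix i k assume "i < dim_row (0\<^sub>m (n+1) (n+1) :: 'a mat)" "k < dim_col (0\<^sub>m (n+1) (n+1) :: 'a mat)"
        then have "i < n+1" "k < n+1" by auto
        then show "z $$ (i,k) = 0\<^sub>m (n+1) (n+1) $$ (i,k)"
          using z0 zin by (cases "k \<noteq> n \<or> i = n") auto
      qed (use cz in auto)
      then show "z \<in> {0\<^sub>m (n+1) (n+1)}" by simp
    qed
  qed
  define f where "f j = Tw n S1 S2 (\<lambda>i. j $$ (i,n))" for j :: "'a mat"
  have inj: "inj_on f J"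
  proof (rule inj_onI)
    fix x y assume x: "x \<in> J" and y: "y \<in> J" and fxy: "f x = f y"
    have cx: "x \<in> carrier_mat (n+1) (n+1)" and cy: "y \<in> carrier_mat (n+1) (n+1)"
      using x y unfolding J_def J_ideal_def by auto
    have e: "x $$ (i,n) = y $$ (i,n)" if "i < n" for i
      using Tw_inj[OF c1 c2 fxy[unfolded f_def] that] .
    show "x = y"
    proof (rule eq_matI)
      fix i k assume "i < dim_row y" "k < dim_col y"
      then have ik: "i < n+1" "k < n+1" using cy by auto
      show "x $$ (i,k) = y $$ (i,k)"
      proof (cases "k \<noteq> n \<or> i = n")
        case True then show ?thesis using x y ik unfolding J_def J_ideal_def by auto
      next
        case False then show ?thesis using e ik by auto
      qed
    qed (use cx cy in auto)
  qed
  have img: "f ` J = semisimple_complements n R J"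
  proof
    show "f ` J \<subseteq> semisimple_complements n R J"
      unfolding f_def RA J_def using Tw_complement[OF c1 c2] by auto
  next
    show "semisimple_complements n R J \<subseteq> f ` J"
    proof
      fix T assume "T \<in> semisimple_complements n R J"
      then obtain w where w: "T = Tw n S1 S2 w"
        using complement_is_Tw[OF c1 c2] unfolding RA J_def by blast
      define j where "j = mat (n+1) (n+1) (\<lambda>(i,k). if k = n \<and> i < n then w i else (0::'a))"
      have jJ: "j \<in> J" unfolding j_def J_def J_ideal_def by auto
      have "f j = T" unfolding f_def w by (rule Tw_cong) (simp add: j_def)
      then show "T \<in> f ` J" using jJ by blast
    qed
  qed
  have "card (semisimple_complements n R J) = card J"
    using inj img card_image by fastforce
  then show ?thesis using part1 by simp
qed

end
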